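(* Let $L,R$ be nonempty subsets of a group $G$. The two-sided group digraph $2\mathrm{S}(G;L,R)$ is weakly connected if and only if $G=\mathcal{W}(\bar{L})\mathcal{W}(\bar{R})$ and some element of $\bar{L}$ or of $\bar{R}$ is weakly connected to $e$.
   Context: For nonempty subsets $L,R$ of a group $G$, the two-sided group digraph $2\mathrm{S}(G;L,R)$ has vertex set $G$ and a directed arc $(g,h)$ if and only if $h=l^{-1}gr$ for some $l\in L$, $r\in R$. Write $\bar{L}=L\cup L^{-1}$, $\bar{R}=R\cup R^{-1}$; for nonempty $S$, $\mathcal{W}(S)$ is the set of elements expressible as finite products $s_1\cdots s_n$, $n\ge1$, $s_i\in S$. Vertex $g$ is weakly connected to $h$ if there is a sequence $g=g_0,\dots,g_n=h$ such that for each $i$ either $(g_{i-1},g_i)$ or $(g_i,g_{i-1})$ is an arc; the digraph is weakly connected if every pair of vertices is weakly connected. *)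

theory Defs
  imports "HOL-Algebra.Coset"
begin

definition tsg_arc :: "('a, 'b) monoid_scheme \<Rightarrow> 'a set \<Rightarrow> 'a set \<Rightarrow> 'a \<Rightarrow> 'a \<Rightarrow> bool" where
  "tsg_arc G L R g h \<longleftrightarrow> g \<in> carrier G \<and> h \<in> carrier G \<and>
     (\<exists>l\<in>L. \<exists>r\<in>R. h = inv\<^bsub>G\<^esub> l \<otimes>\<^bsub>G\<^esub> g \<otimes>\<^bsub>G\<^esub> r)"

definition tsg_weakly_conn :: "('a, 'b) monoid_scheme \<Rightarrow> 'a set \<Rightarrow> 'a set \<Rightarrow> 'a \<Rightarrow> 'a \<Rightarrow> bool" where
  "tsg_weakly_conn G L R g h \<longleftrightarrow>
     (\<lambda>x y. tsg_arc G L R x y \<or> tsg_arc G L R y x)\<^sup>*\<^sup>* g h"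

definition tsg_weakly_connected :: "('a, 'b) monoid_scheme \<Rightarrow> 'a set \<Rightarrow> 'a set \<Rightarrow> bool" where
  "tsg_weakly_connected G L R \<longleftrightarrow>
     (\<forall>g\<in>carrier G. \<forall>h\<in>carrier G. tsg_weakly_conn G L R g h)"

definition sym_set :: "('a, 'b) monoid_scheme \<Rightarrow> 'a set \<Rightarrow> 'a set" where
  "sym_set G S = S \<union> (\<lambda>x. inv\<^bsub>G\<^esub> x) ` S"

inductive_set words_set :: "('a, 'b) monoid_scheme \<Rightarrow> 'a set \<Rightarrow> 'a set"
  for G :: "('a, 'b) monoid_scheme" and S :: "'a set" where
  single: "s \<in> S \<Longrightarrow> s \<in> words_set G S"
| snoc: "x \<in> words_set G S \<Longrightarrow> s \<in> S \<Longrightarrow> x \<otimes>\<^bsub>G\<^esub> s \<in> words_set G S"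

end

theory Submission
  imports Defs
begin

locale tsg = group G for G (structure) +
  fixes L R :: "'a set"
  assumes Lc: "L \<subseteq> carrier G" and Rc: "R \<subseteq> carrier G"
begin

abbreviation cn where "cn \<equiv> tsg_weakly_conn G L R"

lemma cn_refl: "cn g g" by (simp add: tsg_weakly_conn_def)

lemma cn_sym: "cn g h \<Longrightarrow> cn h g"
  unfolding tsg_weakly_conn_def
  by (rule sympD[OF symp_rtranclp]) (auto intro: sympI)

lemma cn_trans: "cn g h \<Longrightarrow> cn h k \<Longrightarrow> cn g k"
  unfolding tsg_weakly_conn_def by (rule rtranclp_trans)

lemma arc_cn: "tsg_arc G L R g h \<Longrightarrow> cn g h"
  unfolding tsg_weakly_conn_def by (rule r_into_rtranclp) simp

lemma arc_cn': "tsg_arc G L R h g \<Longrightarrow> cn g h"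
  unfolding tsg_weakly_conn_def by (rule r_into_rtranclp) simp

lemma arcI: "g \<in> carrier G \<Longrightarrow> l \<in> L \<Longrightarrow> r \<in> R \<Longrightarrow> h = inv l \<otimes> g \<otimes> r \<Longrightarrow> tsg_arc G L R g h"
  unfolding tsg_arc_def using Lc Rc by auto

lemma arcE: assumes "tsg_arc G L R g h"
  obtains l r where "g \<in> carrier G" "l \<in> L" "r \<in> R" "h = inv l \<otimes> g \<otimes> r"
  using assms unfolding tsg_arc_def by auto

lemma cn_carrier: "cn g h \<Longrightarrow> g \<in> carrier G \<Longrightarrow> h \<in> carrier G"
  unfolding tsg_weakly_conn_def
  by (induction rule: rtranclp_induct) (auto simp: tsg_arc_def)

lemma canc1[simp]: "x \<in> carrier G \<Longrightarrow> y \<in> carrier G \<Longrightarrow> inv x \<otimes> (x \<otimes> y) = y"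
  by (simp add: m_assoc[symmetric])
lemma canc2[simp]: "x \<in> carrier G \<Longrightarrow> y \<in> carrier G \<Longrightarrow> x \<otimes> (inv x \<otimes> y) = y"
  by (simp add: m_assoc[symmetric])

lemma cn_map:
  assumes "\<And>y z. tsg_arc G L R y z \<Longrightarrow> cn (f y) (f z)"
  shows "cn g h \<Longrightarrow> cn (f g) (f h)"
  unfolding tsg_weakly_conn_def
proof (induction rule: rtranclp_induct)
  case base then show ?case by simp
next
  case (step y z)
  have "cn (f y) (f z)" using step(2) assms cn_sym by blast
  then show ?case using step(3) cn_trans unfolding tsg_weakly_conn_def by blast
qed

lemma arc_left:
  assumes s: "s \<in> sym_set G L" and a: "tsg_arc G L R g h"
  shows "cn (s \<otimes> g) (s \<otimes> h)"
proof -
  from a obtain l r where gc: "g \<in> carrier G" and l: "l \<in> L" and r: "r \<in> R" and h: "h = inv l \<otimes> g \<otimes> r"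
    by (rule arcE)
  have lc: "l \<in> carrier G" and rc: "r \<in> carrier G" using l r Lc Rc by auto
  from s consider (p) l1 where "s = l1" "l1 \<in> L" | (n) l1 where "s = inv l1" "l1 \<in> L"
    unfolding sym_set_def by auto
  then show ?thesis
  proof cases
    case p
    have l1c: "l1 \<in> carrier G" using p Lc by auto
    have 1: "tsg_arc G L R (l1 \<otimes> g) (g \<otimes> r)"
      by (rule arcI[OF _ p(2) r]) (use gc l1c rc in \<open>simp_all add: m_assoc\<close>)
    have 2: "tsg_arc G L R (g \<otimes> r) (inv l \<otimes> (g \<otimes> r) \<otimes> r)"
      by (rule arcI[OF _ l r]) (use gc rc in simp_all)
    have 3: "tsg_arc G L R (l1 \<otimes> h) (inv l \<otimes> (g \<otimes> r) \<otimes> r)"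
      by (rule arcI[OF _ p(2) r]) (use gc l1c rc lc h in \<open>simp_all add: m_assoc\<close>)
    show ?thesis using cn_trans[OF cn_trans[OF arc_cn[OF 1] arc_cn[OF 2]] arc_cn'[OF 3]] p by simp
  next
    case n
    have l1c: "l1 \<in> carrier G" using n Lc by auto
    have 1: "tsg_arc G L R (g \<otimes> inv r) (inv l1 \<otimes> g)"
      by (rule arcI[OF _ n(2) r]) (use gc l1c rc in \<open>simp_all add: m_assoc\<close>)
    have 2: "tsg_arc G L R (g \<otimes> inv r) (inv l \<otimes> g)"
      by (rule arcI[OF _ l r]) (use gc lc rc in \<open>simp_all add: m_assoc\<close>)
    have 3: "tsg_arc G L R (inv l \<otimes> g) (inv l1 \<otimes> h)"
      by (rule arcI[OF _ n(2) r]) (use gc l1c rc lc h in \<open>simp_all add: m_assoc\<close>)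
    show ?thesis using cn_trans[OF cn_trans[OF arc_cn'[OF 1] arc_cn[OF 2]] arc_cn[OF 3]] n by simp
  qed
qed

lemma arc_right:
  assumes s: "t \<in> sym_set G R" and a: "tsg_arc G L R g h"
  shows "cn (g \<otimes> t) (h \<otimes> t)"
proof -
  from a obtain l r where gc: "g \<in> carrier G" and l: "l \<in> L" and r: "r \<in> R" and h: "h = inv l \<otimes> g \<otimes> r"
    by (rule arcE)
  have lc: "l \<in> carrier G" and rc: "r \<in> carrier G" using l r Lc Rc by auto
  from s consider (p) r1 where "t = r1" "r1 \<in> R" | (n) r1 where "t = inv r1" "r1 \<in> R"
    unfolding sym_set_def by auto
  then show ?thesis
  proof cases
    case p
    have r1c: "r1 \<in> carrier G" using p Rc by auto
    have 1: "tsg_arc G L R (l \<otimes> g) (g \<otimes> r1)"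
      by (rule arcI[OF _ l p(2)]) (use gc lc r1c in \<open>simp_all add: m_assoc\<close>)
    have 2: "tsg_arc G L R (l \<otimes> g) (g \<otimes> r)"
      by (rule arcI[OF _ l r]) (use gc lc rc in \<open>simp_all add: m_assoc\<close>)
    have 3: "tsg_arc G L R (g \<otimes> r) (h \<otimes> r1)"
      by (rule arcI[OF _ l p(2)]) (use gc r1c rc lc h in \<open>simp_all add: m_assoc\<close>)
    show ?thesis using cn_trans[OF cn_trans[OF arc_cn'[OF 1] arc_cn[OF 2]] arc_cn[OF 3]] p by simp
  next
    case n
    have r1c: "r1 \<in> carrier G" using n Rc by auto
    have 1: "tsg_arc G L R (g \<otimes> inv r1) (inv l \<otimes> g)"
      by (rule arcI[OF _ l n(2)]) (use gc lc r1c in \<open>simp_all add: m_assoc\<close>)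
    have 2: "tsg_arc G L R (inv l \<otimes> g) (inv l \<otimes> (inv l \<otimes> g) \<otimes> r)"
      by (rule arcI[OF _ l r]) (use gc lc rc in \<open>simp_all add: m_assoc\<close>)
    have 3: "tsg_arc G L R (h \<otimes> inv r1) (inv l \<otimes> (inv l \<otimes> g) \<otimes> r)"
      by (rule arcI[OF _ l n(2)]) (use gc r1c rc lc h in \<open>simp_all add: m_assoc\<close>)
    show ?thesis using cn_trans[OF cn_trans[OF arc_cn[OF 1] arc_cn[OF 2]] arc_cn'[OF 3]] n by simp
  qed
qed

lemma sym_carrier: "S \<subseteq> carrier G \<Longrightarrow> sym_set G S \<subseteq> carrier G"
  unfolding sym_set_def by auto

lemma W_carrier: assumes "S \<subseteq> carrier G" shows "x \<in> words_set G S \<Longrightarrow> x \<in> carrier G"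
  by (induction rule: words_set.induct) (use assms in auto)

lemma left1: "s \<in> sym_set G L \<Longrightarrow> cn g h \<Longrightarrow> cn (s \<otimes> g) (s \<otimes> h)"
  by (rule cn_map[where f = "\<lambda>y. s \<otimes> y"]) (rule arc_left)

lemma right1: "s \<in> sym_set G R \<Longrightarrow> cn g h \<Longrightarrow> cn (g \<otimes> s) (h \<otimes> s)"
  by (rule cn_map[where f = "\<lambda>y. y \<otimes> s"]) (rule arc_right)

lemma W_left: assumes "S \<subseteq> carrier G" "s \<in> S" shows "a \<in> words_set G S \<Longrightarrow> s \<otimes> a \<in> words_set G S"
proof (induction rule: words_set.induct)
  case (single x) then show ?case using assms by (auto intro: words_set.intros)
next
  case (snoc x t)
  have "x \<in> carrier G" using W_carrier[OF assms(1) snoc(1)] .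
  moreover have "s \<in> carrier G" "t \<in> carrier G" using assms snoc by auto
  ultimately have "s \<otimes> (x \<otimes> t) = (s \<otimes> x) \<otimes> t" by (simp add: m_assoc)
  then show ?case using snoc by (auto intro: words_set.intros)
qed

lemma left_ext: assumes u: "u \<in> words_set G (sym_set G L)"
  shows "cn g h \<Longrightarrow> g \<in> carrier G \<Longrightarrow> cn (u \<otimes> g) (u \<otimes> h)"
  using u
proof (induction arbitrary: g h rule: words_set.induct)
  case (single s) then show ?case using left1 by blast
next
  case (snoc x s)
  have sc: "s \<in> carrier G" using snoc sym_carrier[OF Lc] by auto
  have xc: "x \<in> carrier G" using snoc W_carrier[OF sym_carrier[OF Lc]] by auto
  have hc: "h \<in> carrier G" using cn_carrier snoc by blast
  have "cn (s \<otimes> g) (s \<otimes> h)" using left1 snoc by blast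
  then have "cn (x \<otimes> (s \<otimes> g)) (x \<otimes> (s \<otimes> h))" using snoc sc by auto
  then show ?case using sc xc hc snoc by (simp add: m_assoc)
qed

lemma right_ext: assumes u: "v \<in> words_set G (sym_set G R)"
  shows "cn g h \<Longrightarrow> g \<in> carrier G \<Longrightarrow> cn (g \<otimes> v) (h \<otimes> v)"
  using u
proof (induction arbitrary: g h rule: words_set.induct)
  case (single s) then show ?case using right1 by blast
next
  case (snoc x s)
  have sc: "s \<in> carrier G" using snoc sym_carrier[OF Rc] by auto
  have xc: "x \<in> carrier G" using snoc W_carrier[OF sym_carrier[OF Rc]] by auto
  have hc: "h \<in> carrier G" using cn_carrier snoc by blast
  have "cn (g \<otimes> x) (h \<otimes> x)" using snoc by auto
  then have "cn (g \<otimes> x \<otimes> s) (h \<otimes> x \<otimes> s)" using right1 snoc by blast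
  then show ?case using sc xc hc snoc by (simp add: m_assoc)
qed

lemma forward_W:
  assumes "L \<noteq> {}" "R \<noteq> {}"
  shows "cn \<one> g \<Longrightarrow> g \<in> words_set G (sym_set G L) <#> words_set G (sym_set G R)"
  unfolding tsg_weakly_conn_def
proof (induction rule: rtranclp_induct)
  case base
  obtain l where l: "l \<in> L" using assms by auto
  obtain r where r: "r \<in> R" using assms by auto
  have lc: "l \<in> carrier G" and rc: "r \<in> carrier G" using l r Lc Rc by auto
  have "inv l \<otimes> l \<in> words_set G (sym_set G L)"
    by (rule words_set.snoc) (use l in \<open>auto simp: sym_set_def intro: words_set.single\<close>)
  moreover have "inv r \<otimes> r \<in> words_set G (sym_set G R)"
    by (rule words_set.snoc) (use r in \<open>auto simp: sym_set_def intro: words_set.single\<close>)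
  ultimately have "\<one> \<otimes> \<one> \<in> words_set G (sym_set G L) <#> words_set G (sym_set G R)"
    using lc rc unfolding set_mult_def by fastforce
  then show ?case by simp
next
  case (step y z)
  from step(3) obtain a b where a: "a \<in> words_set G (sym_set G L)" and b: "b \<in> words_set G (sym_set G R)"
    and y: "y = a \<otimes> b" unfolding set_mult_def by auto
  have ac: "a \<in> carrier G" using a W_carrier[OF sym_carrier[OF Lc]] by auto
  have bc: "b \<in> carrier G" using b W_carrier[OF sym_carrier[OF Rc]] by auto
  from step(2) show ?case
  proof
    assume "tsg_arc G L R y z"
    then obtain l r where l: "l \<in> L" and r: "r \<in> R" and z: "z = inv l \<otimes> y \<otimes> r" by (rule arcE)
    have lc: "l \<in> carrier G" and rc: "r \<in> carrier G" using l r Lc Rc by auto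
    have "inv l \<otimes> a \<in> words_set G (sym_set G L)"
      by (rule W_left[OF sym_carrier[OF Lc] _ a]) (use l in \<open>auto simp: sym_set_def\<close>)
    moreover have "b \<otimes> r \<in> words_set G (sym_set G R)"
      by (rule words_set.snoc[OF b]) (use r in \<open>auto simp: sym_set_def\<close>)
    moreover have "z = (inv l \<otimes> a) \<otimes> (b \<otimes> r)" using z y ac bc lc rc by (simp add: m_assoc)
    ultimately show ?thesis unfolding set_mult_def by blast
  next
    assume "tsg_arc G L R z y"
    then obtain l r where zc: "z \<in> carrier G" and l: "l \<in> L" and r: "r \<in> R" and z: "y = inv l \<otimes> z \<otimes> r" by (rule arcE)
    have lc: "l \<in> carrier G" and rc: "r \<in> carrier G" using l r Lc Rc by auto
    have "l \<otimes> a \<in> words_set G (sym_set G L)"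
      by (rule W_left[OF sym_carrier[OF Lc] _ a]) (use l in \<open>auto simp: sym_set_def\<close>)
    moreover have "b \<otimes> inv r \<in> words_set G (sym_set G R)"
      by (rule words_set.snoc[OF b]) (use r in \<open>auto simp: sym_set_def\<close>)
    moreover have "z = (l \<otimes> a) \<otimes> (b \<otimes> inv r)"
    proof -
      have "l \<otimes> y \<otimes> inv r = z" using z zc lc rc by (simp add: m_assoc)
      then show ?thesis using y ac bc lc rc by (simp add: m_assoc)
    qed
    ultimately show ?thesis unfolding set_mult_def by blast
  qed
qed

lemma backward:
  assumes ne: "L \<noteq> {}" "R \<noteq> {}"
    and cov: "carrier G = words_set G (sym_set G L) <#> words_set G (sym_set G R)"
    and x: "x \<in> sym_set G L \<union> sym_set G R" "cn x \<one>"
  shows "tsg_weakly_connected G L R"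
proof -
  obtain l0 where l0: "l0 \<in> L" using ne by auto
  have LR: "cn l r" if "l \<in> L" "r \<in> R" for l r
  proof -
    have "l \<in> carrier G" "r \<in> carrier G" using that Lc Rc by auto
    then show ?thesis by (intro arc_cn arcI[OF _ that(1) that(2)]) (simp_all add: m_assoc)
  qed
  have all: "cn y y'" if "y \<in> L \<union> R" "y' \<in> L \<union> R" for y y'
  proof -
    have "cn y l0" if "y \<in> L \<union> R" for y
    proof -
      obtain r0 where r0: "r0 \<in> R" using ne by auto
      show ?thesis using that LR[OF _ r0] LR[OF l0] LR[OF l0 r0] cn_sym cn_trans by blast
    qed
    then show ?thesis using that cn_sym cn_trans by blast
  qed
  have "\<exists>y \<in> L \<union> R. cn y \<one>"
  proof -
    from x(1) consider "x \<in> L \<union> R" | l where "l \<in> L" "x = inv l" | r where "r \<in> R" "x = inv r"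
      unfolding sym_set_def by auto
    then show ?thesis
    proof cases
      case 1 then show ?thesis using x by blast
    next
      case (2 l)
      have lc: "l \<in> carrier G" using 2 Lc by auto
      have "l \<in> words_set G (sym_set G L)" using 2 by (auto simp: sym_set_def intro: words_set.single)
      from left_ext[OF this x(2)] have "cn (l \<otimes> x) (l \<otimes> \<one>)" using 2 lc by simp
      then show ?thesis using 2 lc cn_sym by auto
    next
      case (3 r)
      have rc: "r \<in> carrier G" using 3 Rc by auto
      have "r \<in> words_set G (sym_set G R)" using 3 by (auto simp: sym_set_def intro: words_set.single)
      from right_ext[OF this x(2)] have "cn (x \<otimes> r) (\<one> \<otimes> r)" using 3 rc by simp
      then show ?thesis using 3 rc cn_sym by auto
    qed
  qed
  then have LR1: "cn y \<one>" if "y \<in> L \<union> R" for y using all that cn_trans by blast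
  have sL: "cn s \<one>" if "s \<in> sym_set G L" for s
  proof -
    from that consider "s \<in> L" | l where "l \<in> L" "s = inv l" unfolding sym_set_def by auto
    then show ?thesis
    proof cases
      case 1 then show ?thesis using LR1 by auto
    next
      case (2 l)
      have lc: "l \<in> carrier G" using 2 Lc by auto
      have "s \<in> words_set G (sym_set G L)" using 2 by (auto simp: sym_set_def intro: words_set.single)
      from left_ext[OF this LR1[of l]] have "cn (s \<otimes> l) (s \<otimes> \<one>)" using 2 lc by simp
      then show ?thesis using 2 lc cn_sym by auto
    qed
  qed
  have sR: "cn s \<one>" if "s \<in> sym_set G R" for s
  proof -
    from that consider "s \<in> R" | l where "l \<in> R" "s = inv l" unfolding sym_set_def by auto
    then show ?thesis
    proof cases
      case 1 then show ?thesis using LR1 by auto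
    next
      case (2 l)
      have lc: "l \<in> carrier G" using 2 Rc by auto
      have "s \<in> words_set G (sym_set G R)" using 2 by (auto simp: sym_set_def intro: words_set.single)
      from right_ext[OF this LR1[of l]] have "cn (l \<otimes> s) (\<one> \<otimes> s)" using 2 lc by simp
      then show ?thesis using 2 lc cn_sym by auto
    qed
  qed
  have WL: "cn u \<one>" if "u \<in> words_set G (sym_set G L)" for u
    using that
  proof (induction rule: words_set.induct)
    case (single s) then show ?case using sL by auto
  next
    case (snoc u s)
    have uc: "u \<in> carrier G" using snoc W_carrier[OF sym_carrier[OF Lc]] by auto
    have sc: "s \<in> carrier G" using snoc sym_carrier[OF Lc] by auto
    have "cn (u \<otimes> s) (u \<otimes> \<one>)" using left_ext[OF snoc(1) sL[OF snoc(2)]] sc by simp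
    then show ?case using snoc uc cn_trans by auto
  qed
  have WR: "cn u \<one>" if "u \<in> words_set G (sym_set G R)" for u
    using that
  proof (induction rule: words_set.induct)
    case (single s) then show ?case using sR by auto
  next
    case (snoc u s)
    have uc: "u \<in> carrier G" using snoc W_carrier[OF sym_carrier[OF Rc]] by auto
    have sc: "s \<in> carrier G" using snoc sym_carrier[OF Rc] by auto
    have "cn (u \<otimes> s) (\<one> \<otimes> s)" using right_ext[OF words_set.single[OF snoc(2)] snoc(3)] uc by simp
    then show ?case using snoc sc sR cn_trans by auto
  qed
  have g1: "cn g \<one>" if "g \<in> carrier G" for g
  proof -
    from that cov obtain a b where a: "a \<in> words_set G (sym_set G L)" and b: "b \<in> words_set G (sym_set G R)"
      and g: "g = a \<otimes> b" unfolding set_mult_def by auto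
    have ac: "a \<in> carrier G" using a W_carrier[OF sym_carrier[OF Lc]] by auto
    have bc: "b \<in> carrier G" using b W_carrier[OF sym_carrier[OF Rc]] by auto
    have "cn (a \<otimes> b) (\<one> \<otimes> b)" using right_ext[OF b WL[OF a]] ac by simp
    then show ?thesis using g bc WR[OF b] cn_trans by auto
  qed
  show ?thesis unfolding tsg_weakly_connected_def using g1 cn_sym cn_trans by blast
qed

end

theorem mainTheorem10:
  fixes G :: "('a, 'b) monoid_scheme" and L R :: "'a set"
  assumes "group G"
    and "L \<subseteq> carrier G" and "L \<noteq> {}"
    and "R \<subseteq> carrier G" and "R \<noteq> {}"
  shows "tsg_weakly_connected G L R \<longleftrightarrow>
           (carrier G = words_set G (sym_set G L) <#>\<^bsub>G\<^esub> words_set G (sym_set G R) \<and>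
            (\<exists>x \<in> sym_set G L \<union> sym_set G R. tsg_weakly_conn G L R x \<one>\<^bsub>G\<^esub>))"
proof -
  interpret tsg G L R using assms by (simp add: tsg_def tsg_axioms_def)
  show ?thesis
  proof
    assume c: "tsg_weakly_connected G L R"
    have sub: "words_set G (sym_set G L) <#>\<^bsub>G\<^esub> words_set G (sym_set G R) \<subseteq> carrier G"
      using W_carrier[OF sym_carrier[OF Lc]] W_carrier[OF sym_carrier[OF Rc]]
      unfolding set_mult_def by auto
    have "carrier G \<subseteq> words_set G (sym_set G L) <#>\<^bsub>G\<^esub> words_set G (sym_set G R)"
      using forward_W[OF assms(3,5)] c unfolding tsg_weakly_connected_def by blast
    moreover obtain l where "l \<in> L" using assms by auto
    moreover have "l \<in> sym_set G L" using \<open>l \<in> L\<close> by (simp add: sym_set_def)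
    ultimately show "carrier G = words_set G (sym_set G L) <#>\<^bsub>G\<^esub> words_set G (sym_set G R) \<and>
            (\<exists>x \<in> sym_set G L \<union> sym_set G R. tsg_weakly_conn G L R x \<one>\<^bsub>G\<^esub>)"
      using sub c Lc unfolding tsg_weakly_connected_def by blast
  next
    assume "carrier G = words_set G (sym_set G L) <#>\<^bsub>G\<^esub> words_set G (sym_set G R) \<and>
            (\<exists>x \<in> sym_set G L \<union> sym_set G R. tsg_weakly_conn G L R x \<one>\<^bsub>G\<^esub>)"
    then show "tsg_weakly_connected G L R" using backward[OF assms(3,5)] by blast
  qed
qed

end
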